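(* Let $t>0$ and let $u_1,\dots,u_n,v_1,\dots,v_n$ be unit vectors in $\mathbb R^d$. For $m\in[n]$ define the InfoNCE loss $$\mathcal L_{\mathrm{InfoNCE}}(U_{[m]},V_{[m]})=\frac1{2m}\sum_{i\in[m]}\log\Big(1+\sum_{j\in[m]\setminus\{i\}}\exp\big((v_j-v_i)^\top u_i/t\big)\Big)+\frac1{2m}\sum_{i\in[m]}\log\Big(1+\sum_{j\in[m]\setminus\{i\}}\exp\big((u_j-u_i)^\top v_i/t\big)\Big),$$ regarded as a function of the similarities $u_k^\top v_l$ ($k,l\in[m]$) as independent variables. Then for any integers $m_1\le m_2$ in $[n]$ and any distinct indices $i\ne j\in[m_1]$, $$0\le\frac{\partial}{\partial(u_i^\top v_j)}\mathcal L_{\mathrm{InfoNCE}}(U_{[m_2]},V_{[m_2]})\le\frac{\partial}{\partial(u_i^\top v_j)}\mathcal L_{\mathrm{InfoNCE}}(U_{[m_1]},V_{[m_1]}),$$ and the second inequality is an equality if and only if $m_1=m_2$.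
   Context: $[m]=\{1,\dots,m\}$ and $(U_{[m]},V_{[m]})=\{(u_i,v_i):i\in[m]\}$. This loss is the symmetric InfoNCE-based loss $\frac12\mathcal L_{\mathrm{info}}(U,V)+\frac12\mathcal L_{\mathrm{info}}(V,U)$ with $\mathcal L_{\mathrm{info}}(U,V)=\frac1m\sum_i\psi\big(\sum_{j\ne i}\phi((v_j-v_i)^\top u_i)\big)$, $\phi(x)=\exp(x/t)$, $\psi(x)=\log(1+x)$. *)

theory Defs
  imports "HOL-Analysis.Analysis"
begin

text \<open>Symmetric InfoNCE loss on the first m pairs (indices 1..m), written as a function of the
  similarity matrix s k l = u_k^T v_l (treated as independent variables).
  Note (v_j - v_i)^T u_i = s i j - s i i and (u_j - u_i)^T v_i = s j i - s i i.\<close>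
definition infonce :: "real \<Rightarrow> nat \<Rightarrow> (nat \<Rightarrow> nat \<Rightarrow> real) \<Rightarrow> real" where
  "infonce t m s =
     1 / (2 * real m) * (\<Sum>i\<in>{1..m}. ln (1 + (\<Sum>j\<in>{1..m} - {i}. exp ((s i j - s i i) / t))))
   + 1 / (2 * real m) * (\<Sum>i\<in>{1..m}. ln (1 + (\<Sum>j\<in>{1..m} - {i}. exp ((s j i - s i i) / t))))"

definition sim_upd :: "(nat \<Rightarrow> nat \<Rightarrow> real) \<Rightarrow> nat \<Rightarrow> nat \<Rightarrow> real \<Rightarrow> nat \<Rightarrow> nat \<Rightarrow> real" where
  "sim_upd s i j x = (\<lambda>k l. if k = i \<and> l = j then x else s k l)"

end

theory Submission
  imports Defs
begin

definition A0 :: "real \<Rightarrow> nat \<Rightarrow> (nat \<Rightarrow> nat \<Rightarrow> real) \<Rightarrow> nat \<Rightarrow> nat \<Rightarrow> real" where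
  "A0 t m s i j = (\<Sum>l\<in>{1..m} - {i} - {j}. exp ((s i l - s i i) / t))"
definition B0 :: "real \<Rightarrow> nat \<Rightarrow> (nat \<Rightarrow> nat \<Rightarrow> real) \<Rightarrow> nat \<Rightarrow> nat \<Rightarrow> real" where
  "B0 t m s i j = (\<Sum>l\<in>{1..m} - {j} - {i}. exp ((s l j - s j j) / t))"
definition C0 :: "real \<Rightarrow> nat \<Rightarrow> (nat \<Rightarrow> nat \<Rightarrow> real) \<Rightarrow> nat \<Rightarrow> nat \<Rightarrow> real" where
  "C0 t m s i j = 1 / (2 * real m) * (\<Sum>k\<in>{1..m} - {i}. ln (1 + (\<Sum>l\<in>{1..m} - {k}. exp ((s k l - s k k) / t))))
   + 1 / (2 * real m) * (\<Sum>k\<in>{1..m} - {j}. ln (1 + (\<Sum>l\<in>{1..m} - {k}. exp ((s l k - s k k) / t))))"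

lemma rewrite:
  assumes "i \<in> {1..m}" "j \<in> {1..m}" "i \<noteq> j"
  shows "infonce t m (sim_upd s i j x) = C0 t m s i j
     + 1 / (2 * real m) * ln (1 + A0 t m s i j + exp ((x - s i i) / t))
     + 1 / (2 * real m) * ln (1 + B0 t m s i j + exp ((x - s j j) / t))"
proof -
  let ?s = "sim_upd s i j x"
  have f: "finite ({1..m} :: nat set)" by simp
  have r1: "(\<Sum>k\<in>{1..m}. ln (1 + (\<Sum>l\<in>{1..m} - {k}. exp ((?s k l - ?s k k) / t))))
     = ln (1 + A0 t m s i j + exp ((x - s i i) / t)) + (\<Sum>k\<in>{1..m} - {i}. ln (1 + (\<Sum>l\<in>{1..m} - {k}. exp ((s k l - s k k) / t))))"
  proof -
    have "(\<Sum>k\<in>{1..m}. ln (1 + (\<Sum>l\<in>{1..m} - {k}. exp ((?s k l - ?s k k) / t))))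
      = ln (1 + (\<Sum>l\<in>{1..m} - {i}. exp ((?s i l - ?s i i) / t))) + (\<Sum>k\<in>{1..m} - {i}. ln (1 + (\<Sum>l\<in>{1..m} - {k}. exp ((?s k l - ?s k k) / t))))"
      using assms by (subst sum.remove[OF f, of i]) auto
    also have "(\<Sum>k\<in>{1..m} - {i}. ln (1 + (\<Sum>l\<in>{1..m} - {k}. exp ((?s k l - ?s k k) / t))))
       = (\<Sum>k\<in>{1..m} - {i}. ln (1 + (\<Sum>l\<in>{1..m} - {k}. exp ((s k l - s k k) / t))))"
      using assms by (intro sum.cong) (auto simp: sim_upd_def)
    also have "(\<Sum>l\<in>{1..m} - {i}. exp ((?s i l - ?s i i) / t)) = exp ((x - s i i) / t) + A0 t m s i j"
    proof -
      have "(\<Sum>l\<in>{1..m} - {i}. exp ((?s i l - ?s i i) / t)) = exp ((?s i j - ?s i i) / t) + (\<Sum>l\<in>{1..m} - {i} - {j}. exp ((?s i l - ?s i i) / t))"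
        using assms by (subst sum.remove[of _ j]) auto
      also have "(\<Sum>l\<in>{1..m} - {i} - {j}. exp ((?s i l - ?s i i) / t)) = A0 t m s i j"
        unfolding A0_def using assms by (intro sum.cong) (auto simp: sim_upd_def)
      finally show ?thesis using assms by (simp add: sim_upd_def)
    qed
    finally show ?thesis by (simp add: ac_simps)
  qed
  have r2: "(\<Sum>k\<in>{1..m}. ln (1 + (\<Sum>l\<in>{1..m} - {k}. exp ((?s l k - ?s k k) / t))))
     = ln (1 + B0 t m s i j + exp ((x - s j j) / t)) + (\<Sum>k\<in>{1..m} - {j}. ln (1 + (\<Sum>l\<in>{1..m} - {k}. exp ((s l k - s k k) / t))))"
  proof -
    have "(\<Sum>k\<in>{1..m}. ln (1 + (\<Sum>l\<in>{1..m} - {k}. exp ((?s l k - ?s k k) / t))))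
      = ln (1 + (\<Sum>l\<in>{1..m} - {j}. exp ((?s l j - ?s j j) / t))) + (\<Sum>k\<in>{1..m} - {j}. ln (1 + (\<Sum>l\<in>{1..m} - {k}. exp ((?s l k - ?s k k) / t))))"
      using assms by (subst sum.remove[OF f, of j]) auto
    also have "(\<Sum>k\<in>{1..m} - {j}. ln (1 + (\<Sum>l\<in>{1..m} - {k}. exp ((?s l k - ?s k k) / t))))
       = (\<Sum>k\<in>{1..m} - {j}. ln (1 + (\<Sum>l\<in>{1..m} - {k}. exp ((s l k - s k k) / t))))"
      using assms by (intro sum.cong) (auto simp: sim_upd_def)
    also have "(\<Sum>l\<in>{1..m} - {j}. exp ((?s l j - ?s j j) / t)) = exp ((x - s j j) / t) + B0 t m s i j"
    proof -
      have "(\<Sum>l\<in>{1..m} - {j}. exp ((?s l j - ?s j j) / t)) = exp ((?s i j - ?s j j) / t) + (\<Sum>l\<in>{1..m} - {j} - {i}. exp ((?s l j - ?s j j) / t))"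
        using assms by (subst sum.remove[of _ i]) auto
      also have "(\<Sum>l\<in>{1..m} - {j} - {i}. exp ((?s l j - ?s j j) / t)) = B0 t m s i j"
        unfolding B0_def using assms by (intro sum.cong) (auto simp: sim_upd_def)
      finally show ?thesis using assms by (simp add: sim_upd_def)
    qed
    finally show ?thesis by (simp add: ac_simps)
  qed
  show ?thesis unfolding infonce_def r1 r2 C0_def by (simp add: algebra_simps)
qed

lemma A0_nonneg: "0 \<le> A0 t m s i j" unfolding A0_def by (rule sum_nonneg) auto
lemma B0_nonneg: "0 \<le> B0 t m s i j" unfolding B0_def by (rule sum_nonneg) auto
lemma A0_mono: "m1 \<le> m2 \<Longrightarrow> A0 t m1 s i j \<le> A0 t m2 s i j"
  unfolding A0_def by (rule sum_mono2) auto
lemma B0_mono: "m1 \<le> m2 \<Longrightarrow> B0 t m1 s i j \<le> B0 t m2 s i j"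
  unfolding B0_def by (rule sum_mono2) auto

definition P :: "real \<Rightarrow> nat \<Rightarrow> (nat \<Rightarrow> nat \<Rightarrow> real) \<Rightarrow> nat \<Rightarrow> nat \<Rightarrow> real" where
  "P t m s i j = exp ((s i j - s i i) / t) / t / (1 + A0 t m s i j + exp ((s i j - s i i) / t))
     + exp ((s i j - s j j) / t) / t / (1 + B0 t m s i j + exp ((s i j - s j j) / t))"

lemma hasder:
  assumes "t > 0" "i \<in> {1..m}" "j \<in> {1..m}" "i \<noteq> j"
  shows "((\<lambda>x. infonce t m (sim_upd s i j x)) has_real_derivative (1 / (2 * real m) * P t m s i j)) (at (s i j))"
proof -
  have pa: "0 < 1 + A0 t m s i j + exp ((x - s i i) / t)" for x using A0_nonneg[of t m s i j] by (smt (verit) exp_gt_zero)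
  have pb: "0 < 1 + B0 t m s i j + exp ((x - s j j) / t)" for x using B0_nonneg[of t m s i j] by (smt (verit) exp_gt_zero)
  have "((\<lambda>x. C0 t m s i j
     + 1 / (2 * real m) * ln (1 + A0 t m s i j + exp ((x - s i i) / t))
     + 1 / (2 * real m) * ln (1 + B0 t m s i j + exp ((x - s j j) / t))) has_real_derivative (1 / (2 * real m) * P t m s i j)) (at (s i j))"
    unfolding P_def
    apply (rule derivative_eq_intros refl | use pa pb assms(1) in force)+
    using assms(1) pa[of "s i j"] pb[of "s i j"] by (simp add: divide_simps)
  then show ?thesis using rewrite[OF assms(2-4)] by simp
qed

lemma den_pos: "0 < 1 + A0 t m s i j + exp y" "0 < 1 + B0 t m s i j + exp y"
  using A0_nonneg[of t m s i j] B0_nonneg[of t m s i j] by (smt (verit) exp_gt_zero)+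

lemma P_pos: "t > 0 \<Longrightarrow> 0 < P t m s i j"
  unfolding P_def using den_pos[of t m s i j]
  by (intro add_pos_pos) (simp_all add: divide_pos_pos)

lemma P_mono: "t > 0 \<Longrightarrow> m1 \<le> m2 \<Longrightarrow> P t m2 s i j \<le> P t m1 s i j"
  unfolding P_def using A0_mono[of m1 m2 t s i j] B0_mono[of m1 m2 t s i j] den_pos[of t m1 s i j] den_pos[of t m2 s i j]
  by (intro add_mono divide_right_mono divide_left_mono) (auto intro: mult_pos_pos)

theorem theorem5p6:
  fixes t :: real and n m1 m2 i j :: nat and u v :: "nat \<Rightarrow> real ^ 'd"
  assumes "t > 0"
    and "\<forall>k\<in>{1..n}. norm (u k) = 1" and "\<forall>k\<in>{1..n}. norm (v k) = 1"
    and "1 \<le> m1" and "m1 \<le> m2" and "m2 \<le> n"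
    and "i \<in> {1..m1}" and "j \<in> {1..m1}" and "i \<noteq> j"
  defines "S \<equiv> (\<lambda>k l. u k \<bullet> v l)"
  shows "(\<lambda>x. infonce t m1 (sim_upd S i j x)) differentiable (at (S i j)) \<and>
         (\<lambda>x. infonce t m2 (sim_upd S i j x)) differentiable (at (S i j)) \<and>
         0 \<le> deriv (\<lambda>x. infonce t m2 (sim_upd S i j x)) (S i j) \<and>
         deriv (\<lambda>x. infonce t m2 (sim_upd S i j x)) (S i j)
           \<le> deriv (\<lambda>x. infonce t m1 (sim_upd S i j x)) (S i j) \<and>
         (deriv (\<lambda>x. infonce t m2 (sim_upd S i j x)) (S i j)
           = deriv (\<lambda>x. infonce t m1 (sim_upd S i j x)) (S i j) \<longleftrightarrow> m1 = m2)"
proof -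
  have i2: "i \<in> {1..m2}" "j \<in> {1..m2}" using assms by auto
  note h1 = hasder[OF assms(1,7,8,9), of S]
  note h2 = hasder[OF assms(1) i2 assms(9), of S]
  have d1: "deriv (\<lambda>x. infonce t m1 (sim_upd S i j x)) (S i j) = 1 / (2 * real m1) * P t m1 S i j"
    using h1 by (rule DERIV_imp_deriv)
  have d2: "deriv (\<lambda>x. infonce t m2 (sim_upd S i j x)) (S i j) = 1 / (2 * real m2) * P t m2 S i j"
    using h2 by (rule DERIV_imp_deriv)
  have p1: "0 < P t m1 S i j" "0 < P t m2 S i j" using P_pos assms(1) by auto
  have pm: "P t m2 S i j \<le> P t m1 S i j" using P_mono assms(1,5) by auto
  have m1p: "real m1 > 0" using assms(4) by simp
  have fle: "1 / (2 * real m2) \<le> 1 / (2 * real m1)" using m1p assms(5) by (simp add: frac_le)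
  have le: "1 / (2 * real m2) * P t m2 S i j \<le> 1 / (2 * real m1) * P t m1 S i j"
    using fle pm p1 m1p by (intro mult_mono) auto
  have eq: "1 / (2 * real m2) * P t m2 S i j = 1 / (2 * real m1) * P t m1 S i j \<longleftrightarrow> m1 = m2"
  proof
    assume e: "1 / (2 * real m2) * P t m2 S i j = 1 / (2 * real m1) * P t m1 S i j"
    show "m1 = m2"
    proof (rule ccontr)
      assume "m1 \<noteq> m2"
      hence "real m1 < real m2" using assms(5) by simp
      hence "1 / (2 * real m2) < 1 / (2 * real m1)" using m1p by (simp add: frac_less2)
      hence "1 / (2 * real m2) * P t m2 S i j < 1 / (2 * real m1) * P t m1 S i j"
        using pm p1 m1p by (intro mult_less_le_imp_less) auto
      with e show False by simp
    qed
  qed simp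
  show ?thesis
    using h1 h2 d1 d2 le eq p1 m1p
    by (auto simp: real_differentiable_def intro!: mult_nonneg_nonneg)
qed

end
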